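(* Let $m\geq2$ be an integer. There is a constant $C_{\mathbb{K},m}\geq1$, not depending on $n$, such that for all $n\ge1$ and all $m$-homogeneous polynomials $P(x)=\sum_{|\alpha|=m}a_\alpha\mathbf{x}^\alpha$ on $\ell_m^n$, \[ \max_{|\alpha|=m}|a_\alpha|\leq C_{\mathbb{K},m}\|P\|, \] and the optimal such constants satisfy $C_{\mathbb{R},m}\le(\sqrt2)^{m-1}m^m$ and $C_{\mathbb{C},m}\le\big(\frac{2}{\sqrt\pi}\big)^{m-1}m^m$. Moreover, for every $r<\infty$ there is no constant $C$ independent of $n$ such that $\big(\sum_{|\alpha|=m}|a_\alpha|^r\big)^{1/r}\le C\|P\|$ for all $m$-homogeneous polynomials $P$ on $\ell_m^n$ and all $n$.
   Context: $\mathbb{K}$ denotes $\mathbb{R}$ or $\mathbb{C}$. For $\alpha\in\mathbb{N}^n$, $|\alpha|=\alpha_1+\cdots+\alpha_n$ and $\mathbf{x}^\alpha=x_1^{\alpha_1}\cdots x_n^{\alpha_n}$. $\ell_m^n$ is $\mathbb{K}^n$ with the $m$-norm, and $\|P\|=\sup\{|P(x)|:\|x\|_m\le1\}$. *)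

theory Defs
  imports "HOL-Analysis.Analysis"
begin

definition multi_idx :: "nat \<Rightarrow> nat \<Rightarrow> (nat \<Rightarrow> nat) set" where
  "multi_idx n m = {\<alpha>. (\<forall>i\<ge>n. \<alpha> i = 0) \<and> (\<Sum>i<n. \<alpha> i) = m}"

definition monom_eval :: "nat \<Rightarrow> (nat \<Rightarrow> nat) \<Rightarrow> (nat \<Rightarrow> 'a::real_normed_field) \<Rightarrow> 'a" where
  "monom_eval n \<alpha> x = (\<Prod>i<n. x i ^ \<alpha> i)"

definition hpoly_eval :: "nat \<Rightarrow> nat \<Rightarrow> ((nat \<Rightarrow> nat) \<Rightarrow> 'a::real_normed_field)
    \<Rightarrow> (nat \<Rightarrow> 'a) \<Rightarrow> 'a" where
  "hpoly_eval n m a x = (\<Sum>\<alpha>\<in>multi_idx n m. a \<alpha> * monom_eval n \<alpha> x)"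

text \<open>Closed unit ball of \<ell>_p^n: (\<Sum>|x_i|^p)^{1/p} \<le> 1, i.e. \<Sum>|x_i|^p \<le> 1 (p \<ge> 1).
  Coordinates outside {0..<n} are irrelevant for the polynomial.\<close>
definition lp_ball :: "nat \<Rightarrow> nat \<Rightarrow> (nat \<Rightarrow> 'a::real_normed_field) set" where
  "lp_ball p n = {x. (\<Sum>i<n. norm (x i) ^ p) \<le> 1}"

definition hpoly_norm :: "nat \<Rightarrow> nat \<Rightarrow> ((nat \<Rightarrow> nat) \<Rightarrow> 'a::real_normed_field) \<Rightarrow> real" where
  "hpoly_norm n m a = (SUP x\<in>(lp_ball m n :: (nat \<Rightarrow> 'a) set). norm (hpoly_eval n m a x))"

definition coeff_max :: "nat \<Rightarrow> nat \<Rightarrow> ((nat \<Rightarrow> nat) \<Rightarrow> 'a::real_normed_field) \<Rightarrow> real" where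
  "coeff_max n m a = Max ((\<lambda>\<alpha>. norm (a \<alpha>)) ` multi_idx n m)"

definition coeff_lr :: "real \<Rightarrow> nat \<Rightarrow> nat \<Rightarrow> ((nat \<Rightarrow> nat) \<Rightarrow> 'a::real_normed_field) \<Rightarrow> real" where
  "coeff_lr r n m a = (\<Sum>\<alpha>\<in>multi_idx n m. norm (a \<alpha>) powr r) powr (1 / r)"

end

theory Submission
  imports Defs "HOL-Computational_Algebra.Formal_Power_Series"
begin
unbundle fps_syntax

definition Dsum :: "nat \<Rightarrow> nat \<Rightarrow> real" where
 "Dsum a b = (\<Sum>j\<le>a. real (a choose j) * (-1)^(a-j) * (2*real j - real a)^b)"

lemma Dsum_fps:
  "Dsum a b / fact b = ((fps_exp (1::real) - fps_exp (-1))^a) $ b"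
proof -
  have "(fps_exp (1::real) - fps_exp (-1))^a = (fps_exp 1 + (- fps_exp (-1)))^a" by simp
  also have "\<dots> = (\<Sum>j\<le>a. of_nat (a choose j) * fps_exp 1 ^ j * (- fps_exp (-1)) ^ (a - j))"
    by (rule binomial_ring)
  also have "\<dots> = (\<Sum>j\<le>a. fps_const (real (a choose j) * (-1)^(a-j)) * fps_exp (2*real j - real a))"
  proof (rule sum.cong[OF refl])
    fix j assume j: "j \<in> {..a}"
    have "fps_exp (1::real) ^ j * (- fps_exp (-1)) ^ (a - j)
          = (-1)^(a-j) * (fps_exp (real j) * fps_exp (real (a-j) * (-1)))"
      by (simp add: fps_exp_power_mult power_minus[of "fps_exp (-1::real)"] del: of_nat_diff)
    also have "\<dots> = (-1)^(a-j) * fps_exp (2*real j - real a)"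
      using j by (simp add: fps_exp_add_mult[symmetric] of_nat_diff algebra_simps)
    finally show "of_nat (a choose j) * fps_exp 1 ^ j * (- fps_exp (-1)) ^ (a - j) =
      fps_const (real (a choose j) * (-1)^(a-j)) * fps_exp (2*real j - real a)"
      by (simp add: fps_of_nat fps_const_mult[symmetric] fps_const_neg[symmetric] fps_const_power[symmetric] mult.assoc)
  qed
  finally show ?thesis
    by (simp add: Dsum_def fps_sum_nth sum_divide_distrib)
qed

lemma Dsum_vals:
  assumes "b \<le> a"
  shows "Dsum a b = (if b < a then 0 else 2^a * fact a)"
proof -
  define E where "E = fps_exp (1::real) - fps_exp (-1)"
  define g where "g = Abs_fps (\<lambda>k. E $ (k+1))"
  have E: "E = fps_X * g"
  proof (rule fps_ext)
    fix n show "E $ n = (fps_X * g) $ n"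
      by (cases n) (simp add: E_def, simp add: g_def)
  qed
  have g0: "g $ 0 = 2" by (simp add: g_def E_def)
  have "E^a = fps_X^a * g^a" by (simp add: E power_mult_distrib)
  hence "E^a $ b = (if b < a then 0 else 2^a)"
    using assms g0 by (simp add: fps_X_power_mult_nth fps_nth_power_0)
  with Dsum_fps[of a b] assms show ?thesis
    by (auto simp: E_def divide_eq_eq split: if_splits)
qed

lemma multi_idx_le: "\<alpha> \<in> multi_idx n m \<Longrightarrow> \<alpha> i \<le> m"
  unfolding multi_idx_def
  by (cases "i < n") (auto intro!: member_le_sum[of i "{..<n}" \<alpha>, simplified] elim: ord_le_eq_trans)

lemma finite_multi_idx: "finite (multi_idx n m)"
proof -
  have "multi_idx n m \<subseteq> (\<lambda>f i. if i < n then f i else 0) ` PiE {..<n} (\<lambda>_. {..m})"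
  proof
    fix \<alpha> assume a: "\<alpha> \<in> multi_idx n m"
    have "\<alpha> = (\<lambda>i. if i < n then restrict \<alpha> {..<n} i else 0)"
      using a by (auto simp: multi_idx_def fun_eq_iff)
    moreover have "restrict \<alpha> {..<n} \<in> PiE {..<n} (\<lambda>_. {..m})"
      using multi_idx_le[OF a] by auto
    ultimately show "\<alpha> \<in> (\<lambda>f i. if i < n then f i else 0) ` PiE {..<n} (\<lambda>_. {..m})"
      by blast
  qed
  moreover have "finite (PiE {..<n} (\<lambda>_. {..m::nat}))" by (simp add: finite_PiE)
  ultimately show ?thesis by (meson finite_imageI finite_subset)
qed

lemma lp_ball_coord:
  assumes "x \<in> lp_ball m n" "m \<ge> 1" "i < n"
  shows "norm (x i) \<le> 1"
proof (rule ccontr)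
  assume "\<not> norm (x i) \<le> 1"
  hence "1 < norm (x i) ^ m" using assms(2) by (simp add: one_less_power)
  also have "norm (x i) ^ m \<le> (\<Sum>k<n. norm (x k) ^ m)"
    using assms(3) by (intro member_le_sum) auto
  also have "\<dots> \<le> 1" using assms(1) by (simp add: lp_ball_def)
  finally show False by simp
qed

lemma monom_bound:
  assumes "x \<in> lp_ball m n" "m \<ge> 1"
  shows "norm (monom_eval n \<beta> x) \<le> 1"
  unfolding monom_eval_def prod_norm[symmetric]
  by (rule prod_le_1) (auto simp: norm_power intro!: power_le_one lp_ball_coord[OF assms])

lemma hpoly_bdd:
  fixes a :: "(nat \<Rightarrow> nat) \<Rightarrow> 'a::real_normed_field"
  assumes "m \<ge> 1"
  shows "bdd_above ((\<lambda>x. norm (hpoly_eval n m a x)) ` (lp_ball m n :: (nat \<Rightarrow> 'a) set))"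
proof (rule bdd_aboveI2)
  fix x :: "nat \<Rightarrow> 'a" assume x: "x \<in> lp_ball m n"
  have "norm (hpoly_eval n m a x) \<le> (\<Sum>\<beta>\<in>multi_idx n m. norm (a \<beta> * monom_eval n \<beta> x))"
    unfolding hpoly_eval_def by (rule norm_sum)
  also have "\<dots> \<le> (\<Sum>\<beta>\<in>multi_idx n m. norm (a \<beta>))"
    by (intro sum_mono) (auto simp: norm_mult intro!: mult_left_le monom_bound[OF x assms])
  finally show "norm (hpoly_eval n m a x) \<le> (\<Sum>\<beta>\<in>multi_idx n m. norm (a \<beta>))" .
qed

lemma zero_in_ball: "m \<ge> 1 \<Longrightarrow> (\<lambda>_. 0) \<in> lp_ball m n"
  by (cases m) (simp_all add: lp_ball_def)

lemma hpoly_norm_upper: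
  fixes x :: "nat \<Rightarrow> 'a::real_normed_field"
  assumes "m \<ge> 1" "x \<in> lp_ball m n"
  shows "norm (hpoly_eval n m a x) \<le> hpoly_norm n m a"
  unfolding hpoly_norm_def by (rule cSUP_upper[OF assms(2) hpoly_bdd[OF assms(1)]])

lemma hpoly_norm_nonneg:
  assumes "m \<ge> 1"
  shows "0 \<le> hpoly_norm n m (a :: _ \<Rightarrow> 'a::real_normed_field)"
  using hpoly_norm_upper[OF assms zero_in_ball[OF assms], of n a] norm_ge_zero order_trans by blast

lemma hpoly_homog:
  "hpoly_eval n m a (\<lambda>i. c * y i) = c ^ m * hpoly_eval n m a y"
proof -
  have "monom_eval n \<beta> (\<lambda>i. c * y i) = c ^ m * monom_eval n \<beta> y" if "\<beta> \<in> multi_idx n m" for \<beta>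
  proof -
    have "(\<Prod>i<n. c ^ \<beta> i) = c ^ m" using that by (simp add: multi_idx_def power_sum[symmetric])
    thus ?thesis by (simp add: monom_eval_def power_mult_distrib prod.distrib)
  qed
  thus ?thesis
    unfolding hpoly_eval_def by (simp add: sum_distrib_left algebra_simps)
qed



lemma multi_idx_neq:
  assumes "\<alpha> \<in> multi_idx n m" "\<beta> \<in> multi_idx n m" "\<beta> \<noteq> \<alpha>"
  shows "\<exists>i<n. \<beta> i < \<alpha> i"
proof (rule ccontr)
  assume "\<not> (\<exists>i<n. \<beta> i < \<alpha> i)"
  hence le: "\<forall>i\<in>{..<n}. \<alpha> i \<le> \<beta> i" by auto
  have "\<forall>i<n. \<alpha> i = \<beta> i"
  proof (rule ccontr)
    assume "\<not> (\<forall>i<n. \<alpha> i = \<beta> i)"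
    then obtain i where "i < n" "\<alpha> i < \<beta> i" using le by force
    hence "sum \<alpha> {..<n} < sum \<beta> {..<n}"
      using le by (intro sum_strict_mono_ex1) auto
    thus False using assms by (simp add: multi_idx_def)
  qed
  moreover have "\<forall>i\<ge>n. \<alpha> i = \<beta> i" using assms by (simp add: multi_idx_def)
  ultimately have "\<alpha> = \<beta>" by (metis ext not_le)
  thus False using assms by simp
qed

lemma extraction:
  fixes a :: "(nat \<Rightarrow> nat) \<Rightarrow> 'a::real_normed_field"
  assumes al: "\<alpha> \<in> multi_idx n m"
  shows "(\<Sum>j\<in>PiE {..<n} (\<lambda>i. {..\<alpha> i}).
            (\<Prod>i<n. of_real (real (\<alpha> i choose j i) * (-1)^(\<alpha> i - j i))) *
            hpoly_eval n m a (\<lambda>i. of_real (2*real (j i) - real (\<alpha> i))))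
       = a \<alpha> * of_real (\<Prod>i<n. 2^(\<alpha> i) * fact (\<alpha> i))"
proof -
  define B where "B = PiE {..<n} (\<lambda>i. {..\<alpha> i})"
  define c where "c i k = real (\<alpha> i choose k) * (-1)^(\<alpha> i - k)" for i k
  define pt where "pt j = (\<lambda>i. of_real (2*real (j i) - real (\<alpha> i)) :: 'a)" for j :: "nat \<Rightarrow> nat"
  have finB: "finite B" unfolding B_def by (simp add: finite_PiE)
  have inner: "(\<Sum>j\<in>B. (\<Prod>i<n. of_real (c i (j i))) * monom_eval n \<beta> (pt j))
      = of_real (\<Prod>i<n. Dsum (\<alpha> i) (\<beta> i))" for \<beta>
  proof -
    have "(\<Sum>j\<in>B. (\<Prod>i<n. of_real (c i (j i))) * monom_eval n \<beta> (pt j))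
        = (\<Sum>j\<in>B. \<Prod>i<n. (of_real (c i (j i) * (2*real (j i) - real (\<alpha> i))^(\<beta> i)) :: 'a))"
      by (simp add: monom_eval_def pt_def prod.distrib[symmetric])
    also have "\<dots> = (\<Prod>i<n. \<Sum>k\<le>\<alpha> i. (of_real (c i k * (2*real k - real (\<alpha> i))^(\<beta> i)) :: 'a))"
      unfolding B_def by (rule prod_sum_PiE[symmetric]) auto
    also have "\<dots> = of_real (\<Prod>i<n. Dsum (\<alpha> i) (\<beta> i))"
      by (simp add: Dsum_def c_def)
    finally show ?thesis .
  qed
  have zero: "(\<Prod>i<n. Dsum (\<alpha> i) (\<beta> i)) = 0" if hb: "\<beta> \<in> multi_idx n m" "\<beta> \<noteq> \<alpha>" for \<beta>
  proof -
    obtain i where "i < n" "\<beta> i < \<alpha> i" using multi_idx_neq[OF al hb] by blast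
    hence "Dsum (\<alpha> i) (\<beta> i) = 0" using Dsum_vals[of "\<beta> i" "\<alpha> i"] by simp
    thus ?thesis using \<open>i < n\<close> by (intro prod_zero) auto
  qed
  have self: "(\<Prod>i<n. Dsum (\<alpha> i) (\<alpha> i)) = (\<Prod>i<n. 2^(\<alpha> i) * fact (\<alpha> i))"
    by (intro prod.cong) (auto simp: Dsum_vals)
  have "(\<Sum>j\<in>B. (\<Prod>i<n. of_real (c i (j i))) * hpoly_eval n m a (pt j))
      = (\<Sum>\<beta>\<in>multi_idx n m. a \<beta> * (\<Sum>j\<in>B. (\<Prod>i<n. of_real (c i (j i))) * monom_eval n \<beta> (pt j)))"
    unfolding hpoly_eval_def
    by (simp add: sum_distrib_left sum_distrib_right sum.swap[of _ B] algebra_simps)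
  also have "\<dots> = (\<Sum>\<beta>\<in>multi_idx n m. if \<beta> = \<alpha> then a \<alpha> * of_real (\<Prod>i<n. 2^(\<alpha> i) * fact (\<alpha> i)) else 0)"
  proof (rule sum.cong[OF refl])
    fix \<beta> assume hb: "\<beta> \<in> multi_idx n m"
    show "a \<beta> * (\<Sum>j\<in>B. (\<Prod>i<n. of_real (c i (j i))) * monom_eval n \<beta> (pt j)) =
      (if \<beta> = \<alpha> then a \<alpha> * of_real (\<Prod>i<n. 2^(\<alpha> i) * fact (\<alpha> i)) else 0)"
    proof (cases "\<beta> = \<alpha>")
      case True thus ?thesis by (simp only: inner self if_True refl)
    next
      case False thus ?thesis
        by (simp only: inner zero[OF hb False] of_real_0 mult_zero_right if_not_P[OF False] if_False)
    qed
  qed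
  also have "\<dots> = a \<alpha> * of_real (\<Prod>i<n. 2^(\<alpha> i) * fact (\<alpha> i))"
    using al finite_multi_idx by simp
  finally show ?thesis by (simp add: B_def c_def pt_def)
qed


lemma coeff_bound:
  fixes a :: "(nat \<Rightarrow> nat) \<Rightarrow> 'a::real_normed_field"
  assumes m: "m \<ge> 1" and al: "\<alpha> \<in> multi_idx n m"
  shows "norm (a \<alpha>) \<le> real m ^ m * hpoly_norm n m a"
proof -
  define B where "B = PiE {..<n} (\<lambda>i. {..\<alpha> i})"
  define H where "H = hpoly_norm n m a"
  define w where "w j = (\<Prod>i<n. of_real (real (\<alpha> i choose j i) * (-1)^(\<alpha> i - j i)) :: 'a)" for j :: "nat \<Rightarrow> nat"
  define pt where "pt j = (\<lambda>i. of_real (2*real (j i) - real (\<alpha> i)) :: 'a)" for j :: "nat \<Rightarrow> nat"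
  have finB: "finite B" unfolding B_def by (simp add: finite_PiE)
  have sumal: "sum \<alpha> {..<n} = m" using al by (simp add: multi_idx_def)
  have mpos: "real m > 0" using m by simp
  have ptb: "norm (hpoly_eval n m a (pt j)) \<le> real m ^ m * H" if j: "j \<in> B" for j
  proof -
    define y where "y i = (of_real ((2*real (j i) - real (\<alpha> i)) / real m) :: 'a)" for i
    have "pt j = (\<lambda>i. of_real (real m) * y i)"
      using mpos by (auto simp: pt_def y_def fun_eq_iff of_real_mult[symmetric])
    hence eq: "hpoly_eval n m a (pt j) = of_real (real m) ^ m * hpoly_eval n m a y"
      by (simp add: hpoly_homog)
    have yi: "norm (y i) ^ m \<le> real (\<alpha> i) / real m" if i: "i < n" for i
    proof -
      have ji: "j i \<le> \<alpha> i" using j i by (auto simp: B_def)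
      have "\<bar>2*real (j i) - real (\<alpha> i)\<bar> \<le> real (\<alpha> i)" using ji by simp
      hence n1: "norm (y i) \<le> real (\<alpha> i) / real m"
        using mpos unfolding y_def norm_of_real by (simp add: abs_divide divide_right_mono)
      have "real (\<alpha> i) \<le> real m" using multi_idx_le[OF al] by simp
      hence "real (\<alpha> i) / real m \<le> 1" using mpos by simp
      hence n2: "norm (y i) \<le> 1" using n1 by linarith
      have "norm (y i) ^ m \<le> norm (y i) ^ 1"
        by (rule power_decreasing) (use m n2 in auto)
      thus ?thesis using n1 by simp
    qed
    have "(\<Sum>i<n. norm (y i) ^ m) \<le> (\<Sum>i<n. real (\<alpha> i) / real m)"
      by (intro sum_mono yi) auto
    also have "\<dots> = 1" using mpos sumal by (simp add: sum_divide_distrib[symmetric] of_nat_sum[symmetric])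
    finally have "y \<in> lp_ball m n" by (simp add: lp_ball_def)
    hence "norm (hpoly_eval n m a y) \<le> H" unfolding H_def by (rule hpoly_norm_upper[OF m])
    thus ?thesis using eq by (simp add: norm_mult norm_power mult_left_mono)
  qed
  have "norm (\<Sum>j\<in>B. w j * hpoly_eval n m a (pt j)) \<le> (\<Sum>j\<in>B. norm (w j) * norm (hpoly_eval n m a (pt j)))"
    by (rule order_trans[OF norm_sum]) (simp add: norm_mult)
  also have "\<dots> \<le> (\<Sum>j\<in>B. (\<Prod>i<n. real (\<alpha> i choose j i)) * (real m ^ m * H))"
    by (intro sum_mono mult_mono ptb) (auto simp: w_def prod_norm[symmetric] norm_mult norm_power intro: prod_nonneg)
  also have "\<dots> = (\<Prod>i<n. \<Sum>k\<le>\<alpha> i. real (\<alpha> i choose k)) * (real m ^ m * H)"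
    unfolding B_def by (simp add: sum_distrib_right prod_sum_PiE)
  also have "(\<Prod>i<n. \<Sum>k\<le>\<alpha> i. real (\<alpha> i choose k)) = 2 ^ m"
  proof -
    have "(\<Prod>i<n. \<Sum>k\<le>\<alpha> i. real (\<alpha> i choose k)) = (\<Prod>i<n. 2 ^ \<alpha> i)"
      by (intro prod.cong refl) (metis choose_row_sum of_nat_numeral of_nat_power of_nat_sum)
    also have "\<dots> = 2 ^ m" using sumal by (simp add: power_sum[symmetric])
    finally show ?thesis .
  qed
  finally have L: "norm (\<Sum>j\<in>B. w j * hpoly_eval n m a (pt j)) \<le> 2 ^ m * (real m ^ m * H)" .
  have EX: "(\<Sum>j\<in>B. w j * hpoly_eval n m a (pt j)) = a \<alpha> * of_real (\<Prod>i<n. 2^(\<alpha> i) * fact (\<alpha> i))"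
    using extraction[OF al, of a] by (simp add: B_def w_def pt_def)
  have F0: "(\<Prod>i<n. fact (\<alpha> i) :: real) \<ge> 1" by (intro prod_ge_1) auto
  have X: "(\<Prod>i<n. 2^(\<alpha> i) * fact (\<alpha> i) :: real) = 2 ^ m * (\<Prod>i<n. fact (\<alpha> i))"
    using sumal by (simp add: prod.distrib power_sum[symmetric])
  have "norm (\<Sum>j\<in>B. w j * hpoly_eval n m a (pt j)) = norm (a \<alpha>) * \<bar>\<Prod>i<n. 2^(\<alpha> i) * fact (\<alpha> i)\<bar>"
    unfolding EX norm_mult norm_of_real ..
  also have "\<dots> = norm (a \<alpha>) * (2 ^ m * (\<Prod>i<n. fact (\<alpha> i)))"
    unfolding X using F0 by simp
  finally have R: "norm (\<Sum>j\<in>B. w j * hpoly_eval n m a (pt j)) = norm (a \<alpha>) * (2 ^ m * (\<Prod>i<n. fact (\<alpha> i)))" .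
  have "norm (a \<alpha>) * 2 ^ m \<le> norm (a \<alpha>) * (2 ^ m * (\<Prod>i<n. fact (\<alpha> i)))"
    using F0 by (intro mult_left_mono) auto
  hence "norm (a \<alpha>) * 2 ^ m \<le> 2 ^ m * (real m ^ m * H)" using L R by linarith
  hence "norm (a \<alpha>) \<le> real m ^ m * H" by (simp add: mult.commute)
  thus ?thesis unfolding H_def .
qed


lemma counterexample:
  fixes r :: real
  assumes m: "m \<ge> 1" and r: "r > 0"
  shows "\<not> (\<exists>C::real. \<forall>n\<ge>1. \<forall>a::(nat \<Rightarrow> nat) \<Rightarrow> 'a::real_normed_field.
        coeff_lr r n m a \<le> C * hpoly_norm n m a)"
proof
  assume "\<exists>C::real. \<forall>n\<ge>1. \<forall>a::(nat \<Rightarrow> nat) \<Rightarrow> 'a. coeff_lr r n m a \<le> C * hpoly_norm n m a"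
  then obtain C where C: "\<And>n a. n \<ge> 1 \<Longrightarrow> coeff_lr r n m (a :: _ \<Rightarrow> 'a) \<le> C * hpoly_norm n m a"
    by blast
  define e where "e i = (\<lambda>k. if k = i then m else 0)" for i :: nat
  have inj: "inj_on e UNIV"
  proof (rule injI)
    fix i j assume "e i = e j"
    hence "e i i = e j i" by simp
    thus "i = j" using m by (auto simp: e_def split: if_splits)
  qed
  have Esub: "e ` {..<n} \<subseteq> multi_idx n m" for n
    by (auto simp: e_def multi_idx_def)
  have key: "real n powr (1/r) \<le> \<bar>C\<bar>" if n: "n \<ge> 1" for n
  proof -
    define E where "E = e ` {..<n}"
    define a where "a \<beta> = (if \<beta> \<in> E then 1 else 0 :: 'a)" for \<beta>
    have cardE: "card E = n" unfolding E_def by (simp add: card_image inj_on_subset[OF inj])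
    have finE: "finite E" unfolding E_def by simp
    have EM: "E \<subseteq> multi_idx n m" unfolding E_def by (rule Esub)
    have "(\<Sum>\<beta>\<in>multi_idx n m. norm (a \<beta>) powr r) = (\<Sum>\<beta>\<in>multi_idx n m. if \<beta> \<in> E then 1 else 0)"
      by (intro sum.cong refl) (simp add: a_def)
    also have "\<dots> = real (card (multi_idx n m \<inter> E))"
      using finite_multi_idx by (simp add: sum.If_cases)
    also have "multi_idx n m \<inter> E = E" using EM by blast
    finally have lr: "coeff_lr r n m a = real n powr (1/r)"
      by (simp add: coeff_lr_def cardE)
    have ev: "hpoly_eval n m a x = (\<Sum>i<n. x i ^ m)" for x
    proof -
      have "hpoly_eval n m a x = (\<Sum>\<beta>\<in>multi_idx n m. if \<beta> \<in> E then monom_eval n \<beta> x else 0)"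
        unfolding hpoly_eval_def by (intro sum.cong refl) (simp add: a_def)
      also have "\<dots> = (\<Sum>\<beta>\<in>E. monom_eval n \<beta> x)"
        using finite_multi_idx EM by (simp add: sum.If_cases Int_absorb1)
      also have "\<dots> = (\<Sum>i<n. monom_eval n (e i) x)"
        unfolding E_def by (rule sum.reindex[OF inj_on_subset[OF inj], unfolded comp_def]) simp
      also have "\<dots> = (\<Sum>i<n. x i ^ m)"
      proof (intro sum.cong refl)
        fix i assume "i \<in> {..<n}"
        have "monom_eval n (e i) x = (\<Prod>k<n. if k = i then x k ^ m else 1)"
          unfolding monom_eval_def e_def by (intro prod.cong refl) simp
        also have "\<dots> = x i ^ m" using \<open>i \<in> {..<n}\<close> by (simp add: prod.delta)
        finally show "monom_eval n (e i) x = x i ^ m" .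
      qed
      finally show ?thesis .
    qed
    have H1: "hpoly_norm n m a \<le> 1"
      unfolding hpoly_norm_def
    proof (rule cSUP_least)
      show "lp_ball m n \<noteq> ({} :: (nat \<Rightarrow> 'a) set)" using zero_in_ball[OF m] by blast
    next
      fix x :: "nat \<Rightarrow> 'a" assume x: "x \<in> lp_ball m n"
      have "norm (hpoly_eval n m a x) \<le> (\<Sum>i<n. norm (x i ^ m))"
        unfolding ev by (rule norm_sum)
      also have "\<dots> \<le> 1" using x by (simp add: lp_ball_def norm_power)
      finally show "norm (hpoly_eval n m a x) \<le> 1" .
    qed
    have H0: "0 \<le> hpoly_norm n m a" by (rule hpoly_norm_nonneg[OF m])
    have "real n powr (1/r) \<le> C * hpoly_norm n m a" using C[OF n, of a] lr by simp
    also have "\<dots> \<le> \<bar>C\<bar>"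
    proof -
      have "C * hpoly_norm n m a \<le> \<bar>C\<bar> * hpoly_norm n m a" using H0 by (intro mult_right_mono) auto
      also have "\<dots> \<le> \<bar>C\<bar>" using H1 H0 by (simp add: mult_left_le)
      finally show ?thesis .
    qed
    finally show ?thesis .
  qed
  obtain N :: nat where N: "(\<bar>C\<bar> + 1) powr r \<le> real N" using real_arch_simple by blast
  define n where "n = max 1 N"
  have n1: "n \<ge> 1" by (simp add: n_def)
  have "(\<bar>C\<bar> + 1) powr r \<le> real n" using N by (simp add: n_def)
  hence "((\<bar>C\<bar> + 1) powr r) powr (1/r) \<le> real n powr (1/r)"
    using r by (intro powr_mono2) auto
  moreover have "((\<bar>C\<bar> + 1) powr r) powr (1/r) = \<bar>C\<bar> + 1"
    using r by (simp add: powr_powr)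
  ultimately show False using key[OF n1] by simp
qed

theorem theorem4:
  fixes m :: nat
  assumes "m \<ge> 2"
  shows
    "(\<exists>C::real. C \<ge> 1 \<and> (\<forall>n\<ge>1. \<forall>a::(nat \<Rightarrow> nat) \<Rightarrow> real.
        coeff_max n m a \<le> C * hpoly_norm n m a))
   \<and> (\<exists>C::real. C \<ge> 1 \<and> (\<forall>n\<ge>1. \<forall>a::(nat \<Rightarrow> nat) \<Rightarrow> complex.
        coeff_max n m a \<le> C * hpoly_norm n m a))
   \<and> (\<forall>n\<ge>1. \<forall>a::(nat \<Rightarrow> nat) \<Rightarrow> real.
        coeff_max n m a \<le> sqrt 2 ^ (m - 1) * real m ^ m * hpoly_norm n m a)
   \<and> (\<forall>n\<ge>1. \<forall>a::(nat \<Rightarrow> nat) \<Rightarrow> complex.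
        coeff_max n m a \<le> (2 / sqrt pi) ^ (m - 1) * real m ^ m * hpoly_norm n m a)
   \<and> (\<forall>r::real. r > 0 \<longrightarrow> \<not> (\<exists>C::real. \<forall>n\<ge>1. \<forall>a::(nat \<Rightarrow> nat) \<Rightarrow> real.
        coeff_lr r n m a \<le> C * hpoly_norm n m a))
   \<and> (\<forall>r::real. r > 0 \<longrightarrow> \<not> (\<exists>C::real. \<forall>n\<ge>1. \<forall>a::(nat \<Rightarrow> nat) \<Rightarrow> complex.
        coeff_lr r n m a \<le> C * hpoly_norm n m a))"
proof -
  have m: "m \<ge> 1" using assms by simp
  have gen: "coeff_max n m a \<le> K * real m ^ m * hpoly_norm n m a"
    if "n \<ge> 1" "K \<ge> 1" for n K and a :: "(nat \<Rightarrow> nat) \<Rightarrow> 'a::real_normed_field"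
  proof -
    have ne: "multi_idx n m \<noteq> {}"
    proof -
      have "(\<lambda>k. if k = 0 then m else 0) \<in> multi_idx n m"
        using that(1) by (auto simp: multi_idx_def sum.delta)
      thus ?thesis by blast
    qed
    have H0: "0 \<le> hpoly_norm n m a" by (rule hpoly_norm_nonneg[OF m])
    have "\<forall>\<alpha>\<in>multi_idx n m. norm (a \<alpha>) \<le> K * real m ^ m * hpoly_norm n m a"
    proof
      fix \<alpha> assume "\<alpha> \<in> multi_idx n m"
      have "norm (a \<alpha>) \<le> real m ^ m * hpoly_norm n m a" by (rule coeff_bound[OF m \<open>\<alpha> \<in> _\<close>])
      also have "\<dots> \<le> K * (real m ^ m * hpoly_norm n m a)"
        using mult_right_mono[OF that(2), of "real m ^ m * hpoly_norm n m a"] H0 by simp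
      finally show "norm (a \<alpha>) \<le> K * real m ^ m * hpoly_norm n m a" by (simp add: mult.assoc)
    qed
    thus ?thesis unfolding coeff_max_def using finite_multi_idx ne by (simp add: Max_le_iff)
  qed
  have K1: "sqrt 2 ^ (m - 1) \<ge> 1" by (rule one_le_power) simp
  have "sqrt pi \<le> sqrt 4" using pi_less_4 by (intro real_sqrt_le_mono) simp
  also have "sqrt 4 = (2::real)" by (simp add: real_sqrt_eq_iff[symmetric] real_sqrt_unique)
  finally have "sqrt pi \<le> 2" .
  hence K2: "(2 / sqrt pi) ^ (m - 1) \<ge> 1" by (intro one_le_power) simp
  have mm: "real m ^ m \<ge> 1" using m by simp
  have K1': "sqrt 2 ^ (m - 1) * real m ^ m \<ge> 1"
    using mult_mono[OF K1 mm] by simp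
  have K2': "(2 / sqrt pi) ^ (m - 1) * real m ^ m \<ge> 1"
    using mult_mono[OF K2 mm] by simp
  have P3: "\<forall>n\<ge>1. \<forall>a::(nat \<Rightarrow> nat) \<Rightarrow> real.
        coeff_max n m a \<le> sqrt 2 ^ (m - 1) * real m ^ m * hpoly_norm n m a"
    using gen[OF _ K1] by blast
  have P4: "\<forall>n\<ge>1. \<forall>a::(nat \<Rightarrow> nat) \<Rightarrow> complex.
        coeff_max n m a \<le> (2 / sqrt pi) ^ (m - 1) * real m ^ m * hpoly_norm n m a"
    using gen[OF _ K2] by blast
  show ?thesis
  proof (intro conjI)
    show "\<exists>C::real. C \<ge> 1 \<and> (\<forall>n\<ge>1. \<forall>a::(nat \<Rightarrow> nat) \<Rightarrow> real.
        coeff_max n m a \<le> C * hpoly_norm n m a)"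
      using P3 K1' by blast
    show "\<exists>C::real. C \<ge> 1 \<and> (\<forall>n\<ge>1. \<forall>a::(nat \<Rightarrow> nat) \<Rightarrow> complex.
        coeff_max n m a \<le> C * hpoly_norm n m a)"
      using P4 K2' by blast
  qed (use P3 P4 counterexample[OF m] in blast)+
qed

end
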